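(* Let $G$ be a connected graph on more than one vertex. Then $\chi_{alg}(G)=2$ if and only if $\chi(G)=2$.
   Context: Graphs are finite, loopless, with symmetric edge sets; $K_c$ is the complete graph on $c$ vertices; $\chi(G)$ is the usual chromatic number. For $|I|=n$, $|O|=m$ ($O=\{0,\dots,m-1\}$), $\mathbb F(n,m)$ is the free product of $n$ copies of the cyclic group of order $m$ with generators $u_v$, $\mathbb C[\mathbb F(n,m)]$ its group $*$-algebra, $\omega=e^{2\pi i/m}$, $e_{v,a}=\frac1m\sum_{k=0}^{m-1}(\omega^{-a}u_v)^k$. For graphs $G,H$, the graph homomorphism game has $I=V(G)$, $O=V(H)$, $\lambda(v,w,a,b)=0$ iff ($v=w$, $a\ne b$) or ($(v,w)\in E(G)$, $(a,b)\notin E(H)$); $\mathcal I(G,H)$ is the two-sided $*$-ideal generated by $\{e_{v,a}e_{w,b}:\lambda(v,w,a,b)=0\}$, $\mathcal A(G,H)$ the quotient, and $\chi_{alg}(G)=\min\{c:\mathcal A(G,K_c)\ne0\}$. *)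

theory Defs
  imports Complex_Main
begin

section \<open>The free product F(n,m) of n copies of Z/m, as reduced words\<close>

text \<open>A word is a list of letters (v,k), standing for u_v^k.  The reduced words are the elements of F(n,m), n = card I.\<close>

type_synonym 'v word = "('v \<times> nat) list"

definition reduced :: "nat \<Rightarrow> 'v set \<Rightarrow> 'v word \<Rightarrow> bool" where
  "reduced m I w \<longleftrightarrow> (\<forall>(v,k)\<in>set w. v \<in> I \<and> 0 < k \<and> k < m) \<and> successively (\<noteq>) (map fst w)"

text \<open>Left multiplication of a reduced word by u_v^k.\<close>
fun ins :: "nat \<Rightarrow> 'v \<times> nat \<Rightarrow> 'v word \<Rightarrow> 'v word" where
  "ins m (v,k) [] = (if k mod m = 0 then [] else [(v, k mod m)])"
| "ins m (v,k) ((w,j) # ys) =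
     (if v = w then (if (k + j) mod m = 0 then ys else (v, (k + j) mod m) # ys)
      else if k mod m = 0 then (w,j) # ys else (v, k mod m) # (w,j) # ys)"

definition wmult :: "nat \<Rightarrow> 'v word \<Rightarrow> 'v word \<Rightarrow> 'v word" where
  "wmult m xs ys = foldr (ins m) xs ys"

definition winv :: "nat \<Rightarrow> 'v word \<Rightarrow> 'v word" where
  "winv m xs = rev (map (\<lambda>(v,k). (v, m - k)) xs)"

definition gen :: "nat \<Rightarrow> 'v \<Rightarrow> 'v word" where
  "gen m v = ins m (v, 1) []"

definition supp :: "('a \<Rightarrow> complex) \<Rightarrow> 'a set" where
  "supp f = {x. f x \<noteq> 0}"

definition gralg :: "nat \<Rightarrow> 'v set \<Rightarrow> ('v word \<Rightarrow> complex) set" where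
  "gralg m I = {f. finite (supp f) \<and> (\<forall>x\<in>supp f. reduced m I x)}"

definition conv :: "nat \<Rightarrow> ('v word \<Rightarrow> complex) \<Rightarrow> ('v word \<Rightarrow> complex) \<Rightarrow> ('v word \<Rightarrow> complex)" where
  "conv m f g = (\<lambda>z. \<Sum>(x,y)\<in>supp f \<times> supp g. if wmult m x y = z then f x * g y else 0)"

definition gstar :: "nat \<Rightarrow> ('v word \<Rightarrow> complex) \<Rightarrow> ('v word \<Rightarrow> complex)" where
  "gstar m f = (\<lambda>x. cnj (f (winv m x)))"

definition delta :: "'v word \<Rightarrow> ('v word \<Rightarrow> complex)" where
  "delta w = (\<lambda>x. if x = w then 1 else 0)"

definition smul :: "complex \<Rightarrow> ('v word \<Rightarrow> complex) \<Rightarrow> ('v word \<Rightarrow> complex)" where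
  "smul c f = (\<lambda>x. c * f x)"

definition gpow :: "nat \<Rightarrow> ('v word \<Rightarrow> complex) \<Rightarrow> nat \<Rightarrow> ('v word \<Rightarrow> complex)" where
  "gpow m f k = (conv m f ^^ k) (delta [])"

definition omega :: "nat \<Rightarrow> complex" where
  "omega m = cis (2 * pi / real m)"

definition proj :: "nat \<Rightarrow> 'v \<Rightarrow> nat \<Rightarrow> ('v word \<Rightarrow> complex)" where
  "proj m v a = (\<lambda>x. (1 / of_nat m) *
     (\<Sum>k<m. gpow m (smul (inverse (omega m) ^ a) (delta (gen m v))) k x))"

inductive_set gideal :: "nat \<Rightarrow> 'v set \<Rightarrow> ('v word \<Rightarrow> complex) set \<Rightarrow> ('v word \<Rightarrow> complex) set"
  for m I S where
  base: "s \<in> S \<Longrightarrow> s \<in> gideal m I S"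
| zero: "(\<lambda>_. 0) \<in> gideal m I S"
| add: "f \<in> gideal m I S \<Longrightarrow> g \<in> gideal m I S \<Longrightarrow> (\<lambda>x. f x + g x) \<in> gideal m I S"
| left: "f \<in> gideal m I S \<Longrightarrow> a \<in> gralg m I \<Longrightarrow> conv m a f \<in> gideal m I S"
| right: "f \<in> gideal m I S \<Longrightarrow> a \<in> gralg m I \<Longrightarrow> conv m f a \<in> gideal m I S"
| star: "f \<in> gideal m I S \<Longrightarrow> gstar m f \<in> gideal m I S"

definition graph :: "'v set \<Rightarrow> ('v \<times> 'v) set \<Rightarrow> bool" where
  "graph V E \<longleftrightarrow> finite V \<and> E \<subseteq> V \<times> V \<and> sym E \<and> (\<forall>v. (v,v) \<notin> E)"

definition connected_graph :: "'v set \<Rightarrow> ('v \<times> 'v) set \<Rightarrow> bool" where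
  "connected_graph V E \<longleftrightarrow> (\<forall>v\<in>V. \<forall>w\<in>V. (v,w) \<in> E\<^sup>*)"

text \<open>The predicate lambda of the homomorphism game G -> K_c (V(K_c) = {0..<c},
  edges of K_c: a \<noteq> b).  lam_zero holds iff lambda(v,w,a,b) = 0.\<close>
definition lam_zero :: "('v \<times> 'v) set \<Rightarrow> 'v \<Rightarrow> 'v \<Rightarrow> nat \<Rightarrow> nat \<Rightarrow> bool" where
  "lam_zero E v w a b \<longleftrightarrow> (v = w \<and> a \<noteq> b) \<or> ((v,w) \<in> E \<and> \<not> (a \<noteq> b))"

definition ideal_hom :: "'v set \<Rightarrow> ('v \<times> 'v) set \<Rightarrow> nat \<Rightarrow> ('v word \<Rightarrow> complex) set" where
  "ideal_hom V E c = gideal c V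
     {conv c (proj c v a) (proj c w b) | v w a b.
        v \<in> V \<and> w \<in> V \<and> a < c \<and> b < c \<and> lam_zero E v w a b}"

text \<open>A(G,K_c) \<noteq> 0 iff the ideal is not the whole algebra.\<close>
definition A_nonzero :: "'v set \<Rightarrow> ('v \<times> 'v) set \<Rightarrow> nat \<Rightarrow> bool" where
  "A_nonzero V E c \<longleftrightarrow> ideal_hom V E c \<noteq> gralg c V"

definition chi_alg :: "'v set \<Rightarrow> ('v \<times> 'v) set \<Rightarrow> nat" where
  "chi_alg V E = (LEAST c. c \<ge> 1 \<and> A_nonzero V E c)"

definition chromatic_number :: "'v set \<Rightarrow> ('v \<times> 'v) set \<Rightarrow> nat" where
  "chromatic_number V E = (LEAST c. \<exists>f. (\<forall>v\<in>V. f v < c) \<and> (\<forall>(v,w)\<in>E. f v \<noteq> f w))"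

end

theory Submission
  imports Defs
begin


lemma reduced_Nil[simp]: "reduced m I []"
  by (simp add: reduced_def)

lemma reduced_Cons: "reduced m I ((v,k)#ys) \<longleftrightarrow> v \<in> I \<and> 0 < k \<and> k < m \<and> reduced m I ys \<and> (ys \<noteq> [] \<longrightarrow> fst (hd ys) \<noteq> v)"
  by (cases ys) (auto simp: reduced_def)

lemma ins_reduced:
  assumes "m > 0" "v \<in> I" "reduced m I ys"
  shows "reduced m I (ins m (v,k) ys)"
proof (cases ys)
  case Nil then show ?thesis using assms by (simp add: reduced_Cons)
next
  case (Cons a ys')
  obtain w j where a: "a = (w,j)" by (cases a)
  show ?thesis using assms unfolding Cons a by (auto simp: reduced_Cons)
qed

lemma wmult_reduced:
  assumes "m > 0" "reduced m I xs" "reduced m I ys"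
  shows "reduced m I (wmult m xs ys)"
  using assms(2)
proof (induction xs)
  case Nil then show ?case using assms by (simp add: wmult_def)
next
  case (Cons a xs)
  obtain v k where a: "a = (v,k)" by (cases a)
  then have "reduced m I xs" "v \<in> I" using Cons.prems by (auto simp: reduced_Cons)
  then show ?case using Cons.IH ins_reduced[OF assms(1)] by (simp add: wmult_def a)
qed

lemma wmult_Nil_left[simp]: "wmult m [] ys = ys" by (simp add: wmult_def)

lemma wmult_Nil_right:
  assumes "reduced m I xs" shows "wmult m xs [] = xs"
  using assms
proof (induction xs)
  case Nil then show ?case by simp
next
  case (Cons a xs)
  obtain v k where a: "a = (v,k)" by (cases a)
  then have r: "reduced m I xs" "0 < k" "k < m" "xs \<noteq> [] \<longrightarrow> fst (hd xs) \<noteq> v"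
    using Cons.prems by (auto simp: reduced_Cons)
  have "wmult m (a#xs) [] = ins m (v,k) xs" using Cons.IH r by (simp add: wmult_def a)
  also have "\<dots> = (v,k)#xs" using r by (cases xs) auto
  finally show ?case by (simp add: a)
qed

lemma succ_neq_sym: "successively (\<lambda>x y. y \<noteq> x) xs = successively (\<noteq>) xs"
  by (rule arg_cong[where f="\<lambda>P. successively P xs"]) auto

lemma map_fst_winv: "map fst (winv m x) = rev (map fst x)"
  unfolding winv_def rev_map map_map by (rule map_cong) (auto simp: case_prod_beta)

lemma winv_winv: "\<forall>(v,k)\<in>set x. k \<le> m \<Longrightarrow> winv m (winv m x) = x"
  unfolding winv_def rev_map map_map rev_rev_ident by (induct x) auto

lemma winv_reduced:
  assumes "reduced m I (winv m x)" shows "reduced m I x" "winv m (winv m x) = x"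
proof -
  have k: "\<forall>(v,k)\<in>set x. v \<in> I \<and> 0 < k \<and> k < m"
    using assms by (auto simp: reduced_def winv_def)
  have "map fst (winv m x) = rev (map fst x)" by (rule map_fst_winv)
  then have "successively (\<noteq>) (map fst x)" using assms
    by (simp add: reduced_def successively_rev succ_neq_sym)
  then show "reduced m I x" using k by (simp add: reduced_def)
  show "winv m (winv m x) = x" using k by (intro winv_winv) auto
qed

lemma winv_reduced2:
  assumes "reduced m I x" shows "reduced m I (winv m x)"
proof -
  have k: "\<forall>(v,k)\<in>set x. v \<in> I \<and> 0 < k \<and> k < m"
    using assms by (auto simp: reduced_def)
  have "map fst (winv m x) = rev (map fst x)" by (rule map_fst_winv)
  then show ?thesis using assms k by (auto simp: reduced_def winv_def successively_rev succ_neq_sym)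
qed


lemma supp_delta[simp]: "supp (delta w) = {w}" by (auto simp: supp_def delta_def)

lemma conv_sup:
  assumes "finite A" "finite B" "supp f \<subseteq> A" "supp g \<subseteq> B"
  shows "conv m f g z = (\<Sum>(x,y)\<in>A\<times>B. if wmult m x y = z then f x * g y else 0)"
  unfolding conv_def
proof (rule sum.mono_neutral_left)
  show "finite (A \<times> B)" using assms by auto
  show "supp f \<times> supp g \<subseteq> A \<times> B" using assms by auto
  show "\<forall>i\<in>A \<times> B - supp f \<times> supp g. (case i of (x, y) \<Rightarrow> if wmult m x y = z then f x * g y else 0) = 0"
    by (auto simp: supp_def split: if_splits)
qed

lemma supp_conv:
  assumes "finite (supp f)" "finite (supp g)"
  shows "supp (conv m f g) \<subseteq> (\<lambda>(x,y). wmult m x y) ` (supp f \<times> supp g)"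
proof
  fix z assume "z \<in> supp (conv m f g)"
  then have "(\<Sum>(x,y)\<in>supp f \<times> supp g. if wmult m x y = z then f x * g y else 0) \<noteq> 0"
    by (simp add: supp_def conv_def)
  then obtain p where "p \<in> supp f \<times> supp g" "(case p of (x,y) \<Rightarrow> if wmult m x y = z then f x * g y else 0) \<noteq> 0"
    by (meson sum.neutral)
  then show "z \<in> (\<lambda>(x,y). wmult m x y) ` (supp f \<times> supp g)"
    by (force split: if_splits)
qed

lemma gralg_iff: "f \<in> gralg m I \<longleftrightarrow> finite (supp f) \<and> (\<forall>x\<in>supp f. reduced m I x)"
  by (simp add: gralg_def)

lemma conv_gralg:
  assumes "m > 0" "f \<in> gralg m I" "g \<in> gralg m I"
  shows "conv m f g \<in> gralg m I"
proof -
  have F: "finite (supp f)" "finite (supp g)" using assms by (auto simp: gralg_iff)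
  show ?thesis unfolding gralg_iff
  proof
    show "finite (supp (conv m f g))"
      using supp_conv[OF F] F by (meson finite_SigmaI finite_imageI finite_subset)
    show "\<forall>x\<in>supp (conv m f g). reduced m I x"
      using supp_conv[OF F] assms wmult_reduced[OF assms(1)] by (fastforce simp: gralg_iff)
  qed
qed

lemma supp_gstar:
  assumes "f \<in> gralg m I"
  shows "supp (gstar m f) = winv m ` supp f"
proof
  show "supp (gstar m f) \<subseteq> winv m ` supp f"
  proof
    fix x assume "x \<in> supp (gstar m f)"
    then have x: "winv m x \<in> supp f" by (simp add: supp_def gstar_def)
    then have "reduced m I (winv m x)" using assms by (auto simp: gralg_iff)
    then have "winv m (winv m x) = x" by (rule winv_reduced)
    then show "x \<in> winv m ` supp f" using x by (metis image_eqI)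
  qed
  show "winv m ` supp f \<subseteq> supp (gstar m f)"
  proof
    fix x assume "x \<in> winv m ` supp f"
    then obtain y where y: "y \<in> supp f" "x = winv m y" by auto
    have "reduced m I y" using assms y(1) by (simp add: gralg_iff)
    then have "winv m x = y" unfolding y(2) by (intro winv_winv) (auto simp: reduced_def)
    then show "x \<in> supp (gstar m f)" using y by (simp add: supp_def gstar_def)
  qed
qed

lemma gstar_gralg:
  assumes "f \<in> gralg m I" shows "gstar m f \<in> gralg m I"
  using assms supp_gstar[OF assms] winv_reduced2 unfolding gralg_iff by (metis finite_imageI imageE)

lemma delta_gralg: "reduced m I w \<Longrightarrow> delta w \<in> gralg m I"
  by (simp add: gralg_iff)

lemma smul_gralg: "f \<in> gralg m I \<Longrightarrow> smul c f \<in> gralg m I"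
  unfolding gralg_iff smul_def supp_def
  by (auto elim: rev_finite_subset)

lemma add_gralg: "f \<in> gralg m I \<Longrightarrow> g \<in> gralg m I \<Longrightarrow> (\<lambda>x. f x + g x) \<in> gralg m I"
proof -
  assume a: "f \<in> gralg m I" "g \<in> gralg m I"
  have "supp (\<lambda>x. f x + g x) \<subseteq> supp f \<union> supp g" by (auto simp: supp_def)
  then show ?thesis using a unfolding gralg_iff by (meson UnE finite_Un rev_finite_subset subsetD)
qed

lemma zero_gralg: "(\<lambda>_. 0) \<in> gralg m I" by (simp add: gralg_iff supp_def)

lemma sum_gralg: "finite K \<Longrightarrow> (\<And>k. k \<in> K \<Longrightarrow> f k \<in> gralg m I) \<Longrightarrow> (\<lambda>x. \<Sum>k\<in>K. f k x) \<in> gralg m I"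
proof (induction K rule: finite_induct)
  case empty then show ?case by (simp add: zero_gralg)
next
  case (insert a K) then show ?case using add_gralg[of "f a" m I "\<lambda>x. \<Sum>k\<in>K. f k x"] by simp
qed

lemma gpow_gralg: "m > 0 \<Longrightarrow> f \<in> gralg m I \<Longrightarrow> gpow m f k \<in> gralg m I"
  by (induct k) (auto simp: gpow_def delta_gralg conv_gralg)

lemma gen_reduced: "m > 0 \<Longrightarrow> v \<in> I \<Longrightarrow> reduced m I (gen m v)"
  unfolding gen_def by (rule ins_reduced) auto

lemma proj_gralg:
  assumes "m > 0" "v \<in> I" shows "proj m v a \<in> gralg m I"
proof -
  have "(\<lambda>x. \<Sum>k<m. gpow m (smul (inverse (omega m) ^ a) (delta (gen m v))) k x) \<in> gralg m I"
    using assms by (intro sum_gralg gpow_gralg smul_gralg delta_gralg gen_reduced) auto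
  from smul_gralg[OF this, of "1 / of_nat m"] show ?thesis by (simp add: proj_def smul_def)
qed

lemma ideal_gralg:
  assumes "m > 0" "S \<subseteq> gralg m I" "f \<in> gideal m I S"
  shows "f \<in> gralg m I"
  using assms(3)
  by induction (use assms in \<open>auto intro: zero_gralg add_gralg conv_gralg gstar_gralg\<close>)



definition chr :: "nat \<Rightarrow> ('v \<Rightarrow> nat) \<Rightarrow> 'v word \<Rightarrow> complex" where
  "chr c col x = omega c ^ sum_list (map (\<lambda>(v,k). col v * k) x)"

definition phi :: "nat \<Rightarrow> ('v \<Rightarrow> nat) \<Rightarrow> ('v word \<Rightarrow> complex) \<Rightarrow> complex" where
  "phi c col f = (\<Sum>x\<in>supp f. f x * chr c col x)"

lemma omega_pow: "omega c ^ n = cis (real n * (2 * pi / real c))"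
  by (simp add: omega_def DeMoivre)

lemma omega_c: "c > 0 \<Longrightarrow> omega c ^ c = 1"
  by (simp add: omega_pow)

lemma omega_mod: assumes "c > 0" shows "omega c ^ n = omega c ^ (n mod c)"
proof -
  have "omega c ^ n = omega c ^ (c * (n div c) + n mod c)" by simp
  also have "\<dots> = (omega c ^ c) ^ (n div c) * omega c ^ (n mod c)"
    by (simp only: power_add power_mult)
  finally have "omega c ^ n = (omega c ^ c) ^ (n div c) * omega c ^ (n mod c)" .
  then show ?thesis using omega_c[OF assms] by simp
qed

lemma omega_modeq: "c > 0 \<Longrightarrow> a mod c = b mod c \<Longrightarrow> omega c ^ a = omega c ^ b"
  by (metis omega_mod)

lemma omega_nz[simp]: "omega c \<noteq> 0" by (simp add: omega_def)

lemma omega_inj: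
  assumes "c > 0" "i < c" "j < c" "omega c ^ i = omega c ^ j"
  shows "i = j"
proof -
  have "cis (real i * (2 * pi / real c)) / cis (real j * (2 * pi / real c)) = 1"
    using assms(4) by (simp add: omega_pow)
  then have "cis ((real i - real j) * (2 * pi / real c)) = 1"
    by (simp only: cis_divide left_diff_distrib)
  then have "cos ((real i - real j) * (2 * pi / real c)) = 1"
    by (metis cis.sel(1) one_complex.sel(1))
  then obtain n :: int where n: "(real i - real j) * (2 * pi / real c) = of_int n * 2 * pi"
    using cos_one_2pi_int by blast
  then have "(real i - real j) * (2 * pi) = (of_int n * real c) * (2 * pi)" using assms(1)
    by (simp add: field_simps)
  then have "(real i - real j) = of_int n * real c" by simp
  then have e: "int i - int j = n * int c"
    by (metis of_int_eq_iff of_int_mult of_int_diff of_int_of_nat_eq)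
  have "n = 0"
  proof (rule ccontr)
    assume "n \<noteq> 0"
    then have "\<bar>n * int c\<bar> \<ge> int c" using assms(1)
      by (simp add: abs_mult mult_le_cancel_right1)
    then show False using e assms(2,3) by linarith
  qed
  then show ?thesis using e by simp
qed

lemma chr_Nil[simp]: "chr c col [] = 1" by (simp add: chr_def)

lemma chr_Cons: "chr c col ((v,k)#ys) = omega c ^ (col v * k) * chr c col ys"
  by (simp add: chr_def power_add)

lemma chr_ins:
  assumes "c > 0"
  shows "chr c col (ins c (v,k) ys) = omega c ^ (col v * k) * chr c col ys"
proof (cases ys)
  case Nil
  have "omega c ^ (col v * (k mod c)) = omega c ^ (col v * k)"
    using assms by (intro omega_modeq) (auto simp: mod_mult_right_eq)
  moreover have "k mod c = 0 \<Longrightarrow> omega c ^ (col v * k) = 1"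
    using omega_modeq[OF assms, of "col v * k" 0] by (simp add: mod_mult_right_eq[symmetric])
  ultimately show ?thesis using Nil by (auto simp: chr_Cons)
next
  case (Cons a ys')
  obtain w j where a: "a = (w,j)" by (cases a)
  have m1: "omega c ^ (col v * ((k+j) mod c)) = omega c ^ (col v * k) * omega c ^ (col v * j)"
  proof -
    have "omega c ^ (col v * ((k+j) mod c)) = omega c ^ (col v * k + col v * j)"
      using assms by (intro omega_modeq) (simp_all add: mod_mult_right_eq flip: distrib_left)
    then show ?thesis by (simp add: power_add)
  qed
  have m2: "omega c ^ (col v * (k mod c)) = omega c ^ (col v * k)"
    using assms by (intro omega_modeq) (auto simp: mod_mult_right_eq)
  have m3: "(k+j) mod c = 0 \<Longrightarrow> omega c ^ (col v * k) * omega c ^ (col v * j) = 1"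
  proof -
    assume h: "(k+j) mod c = 0"
    have "(col v * (k+j)) mod c = (col v * ((k+j) mod c)) mod c" by (simp add: mod_mult_right_eq)
    then have "(col v * (k+j)) mod c = 0 mod c" using h by simp
    then have "omega c ^ (col v * (k+j)) = omega c ^ 0" using assms by (rule omega_modeq[rotated])
    then show ?thesis by (simp add: distrib_left power_add)
  qed
  have m4: "k mod c = 0 \<Longrightarrow> omega c ^ (col v * k) = 1"
    using omega_modeq[OF assms, of "col v * k" 0] by (simp add: mod_mult_right_eq[symmetric])
  show ?thesis using m1 m2 m3 m4 unfolding Cons a by (auto simp: chr_Cons mult.assoc)
qed

lemma chr_wmult: "c > 0 \<Longrightarrow> chr c col (wmult c xs ys) = chr c col xs * chr c col ys"
proof (induction xs)
  case Nil then show ?case by simp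
next
  case (Cons a xs)
  obtain v k where a: "a = (v,k)" by (cases a)
  show ?case using Cons by (simp add: wmult_def a chr_ins chr_Cons)
qed

lemma phi_sup: "finite A \<Longrightarrow> supp f \<subseteq> A \<Longrightarrow> phi c col f = (\<Sum>x\<in>A. f x * chr c col x)"
  unfolding phi_def by (rule sum.mono_neutral_left) (auto simp: supp_def)

lemma phi_conv:
  assumes "c > 0" "finite (supp f)" "finite (supp g)"
  shows "phi c col (conv c f g) = phi c col f * phi c col g"
proof -
  let ?A = "supp f" and ?B = "supp g"
  let ?C = "(\<lambda>(x,y). wmult c x y) ` (?A \<times> ?B)"
  have fC: "finite ?C" using assms by auto
  have "phi c col (conv c f g) = (\<Sum>z\<in>?C. conv c f g z * chr c col z)"
    using phi_sup[OF fC supp_conv[OF assms(2,3)]] .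
  also have "\<dots> = (\<Sum>z\<in>?C. \<Sum>p\<in>?A\<times>?B. (if wmult c (fst p) (snd p) = z then f (fst p) * g (snd p) else 0) * chr c col z)"
    by (simp add: conv_def sum_distrib_right case_prod_beta)
  also have "\<dots> = (\<Sum>p\<in>?A\<times>?B. \<Sum>z\<in>?C. (if wmult c (fst p) (snd p) = z then f (fst p) * g (snd p) else 0) * chr c col z)"
    by (rule sum.swap)
  also have "\<dots> = (\<Sum>p\<in>?A\<times>?B. f (fst p) * g (snd p) * chr c col (wmult c (fst p) (snd p)))"
  proof (rule sum.cong[OF refl])
    fix p assume p: "p \<in> ?A \<times> ?B"
    then have "wmult c (fst p) (snd p) \<in> ?C" by (force simp: case_prod_beta)
    then show "(\<Sum>z\<in>?C. (if wmult c (fst p) (snd p) = z then f (fst p) * g (snd p) else 0) * chr c col z)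
        = f (fst p) * g (snd p) * chr c col (wmult c (fst p) (snd p))"
    proof -
      have e: "\<And>z. (if wmult c (fst p) (snd p) = z then f (fst p) * g (snd p) else 0) * chr c col z
          = (if wmult c (fst p) (snd p) = z then f (fst p) * g (snd p) * chr c col (wmult c (fst p) (snd p)) else 0)"
        by auto
      show ?thesis unfolding e using fC \<open>wmult c (fst p) (snd p) \<in> ?C\<close> by (simp add: sum.delta')
    qed
  qed
  also have "\<dots> = (\<Sum>p\<in>?A\<times>?B. (f (fst p) * chr c col (fst p)) * (g (snd p) * chr c col (snd p)))"
    using assms(1) by (simp add: chr_wmult mult_ac)
  also have "\<dots> = phi c col f * phi c col g"
    unfolding phi_def sum_product sum.cartesian_product by (simp add: case_prod_beta)
  finally show ?thesis .
qed

lemma chr_winv: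
  assumes "c > 0" "\<forall>(v,k)\<in>set y. k \<le> c"
  shows "chr c col (winv c y) = cnj (chr c col y)"
proof -
  define S where "S = sum_list (map (\<lambda>(v,k). col v * k) y)"
  define T where "T = sum_list (map (\<lambda>(v,k). col v * (c - k)) y)"
  have ST: "T + S = c * sum_list (map (\<lambda>(v,k). col v) y)"
    unfolding S_def T_def using assms(2)
    by (induct y) (auto simp: algebra_simps diff_mult_distrib2)
  have T: "chr c col (winv c y) = omega c ^ T"
    unfolding chr_def winv_def T_def map_map
    by (simp add: comp_def case_prod_beta flip: rev_map) (simp add: case_prod_unfold)
  have "omega c ^ T * omega c ^ S = 1"
    using ST omega_c[OF assms(1)] by (simp flip: power_add add: power_mult)
  then have "omega c ^ T = inverse (omega c ^ S)" by (simp add: field_simps)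
  also have "\<dots> = cnj (omega c ^ S)" by (simp add: omega_pow cis_cnj)
  finally show ?thesis using T by (simp add: chr_def S_def)
qed

lemma phi_gstar:
  assumes "c > 0" "f \<in> gralg c I"
  shows "phi c col (gstar c f) = cnj (phi c col f)"
proof -
  have inj: "inj_on (winv c) (supp f)"
    using assms(2) winv_reduced2 winv_reduced(2) unfolding gralg_iff by (metis inj_onI)
  have "phi c col (gstar c f) = (\<Sum>x\<in>winv c ` supp f. gstar c f x * chr c col x)"
    by (simp add: phi_def supp_gstar[OF assms(2)])
  also have "\<dots> = (\<Sum>y\<in>supp f. gstar c f (winv c y) * chr c col (winv c y))"
    by (simp add: sum.reindex[OF inj])
  also have "\<dots> = (\<Sum>y\<in>supp f. cnj (f y * chr c col y))"
  proof (rule sum.cong[OF refl])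
    fix y assume y: "y \<in> supp f"
    then have r: "reduced c I y" using assms(2) by (auto simp: gralg_iff)
    then have "winv c (winv c y) = y" using winv_reduced(2) winv_reduced2 by metis
    moreover have "\<forall>(v,k)\<in>set y. k \<le> c" using r by (auto simp: reduced_def)
    ultimately show "gstar c f (winv c y) * chr c col (winv c y) = cnj (f y * chr c col y)"
      using chr_winv[OF assms(1), of y col] by (simp add: gstar_def)
  qed
  also have "\<dots> = cnj (phi c col f)" by (simp add: phi_def)
  finally show ?thesis .
qed

lemma phi_add:
  assumes "finite (supp f)" "finite (supp g)"
  shows "phi c col (\<lambda>x. f x + g x) = phi c col f + phi c col g"
proof -
  have s: "supp (\<lambda>x. f x + g x) \<subseteq> supp f \<union> supp g" by (auto simp: supp_def)
  show ?thesis using assms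
    by (simp add: phi_sup[OF _ s] phi_sup[of "supp f \<union> supp g" f] phi_sup[of "supp f \<union> supp g" g]
        sum.distrib distrib_right)
qed

lemma phi_smul: "phi c col (smul a f) = a * phi c col f"
proof (cases "a = 0")
  case True then show ?thesis by (simp add: phi_def smul_def supp_def)
next
  case False
  then have "supp (smul a f) = supp f" by (auto simp: supp_def smul_def)
  then show ?thesis by (simp add: phi_def smul_def sum_distrib_left mult_ac)
qed

lemma phi_delta[simp]: "phi c col (delta w) = chr c col w"
  unfolding phi_def supp_delta by (simp add: delta_def)

lemma phi_zero[simp]: "phi c col (\<lambda>_. 0) = 0" by (simp add: phi_def supp_def)

lemma phi_sum:
  "finite K \<Longrightarrow> (\<And>k. k \<in> K \<Longrightarrow> f k \<in> gralg m I) \<Longrightarrow> phi c col (\<lambda>x. \<Sum>k\<in>K. f k x) = (\<Sum>k\<in>K. phi c col (f k))"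
proof (induction K rule: finite_induct)
  case empty then show ?case by simp
next
  case (insert a K)
  have "finite (supp (f a))" using insert by (auto simp: gralg_iff)
  moreover have "finite (supp (\<lambda>x. \<Sum>k\<in>K. f k x))" using sum_gralg[of K f m I] insert by (auto simp: gralg_iff)
  ultimately show ?case using insert phi_add[of "f a" "\<lambda>x. \<Sum>k\<in>K. f k x"] by simp
qed

lemma phi_gpow:
  assumes "c > 0" "f \<in> gralg c I" shows "phi c col (gpow c f k) = phi c col f ^ k"
proof (induction k)
  case 0 then show ?case by (simp add: gpow_def)
next
  case (Suc k)
  have "gpow c f (Suc k) = conv c f (gpow c f k)" by (simp add: gpow_def)
  moreover have "finite (supp (gpow c f k))" "finite (supp f)"
    using gpow_gralg[OF assms] assms by (auto simp: gralg_iff)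
  ultimately show ?case using Suc phi_conv[OF assms(1), of f "gpow c f k" col] by simp
qed

lemma phi_proj:
  assumes "c > 0" "v \<in> I" "a < c" "col v < c"
  shows "phi c col (proj c v a) = (if a = col v then 1 else 0)"
proof -
  define F where "F = smul (inverse (omega c) ^ a) (delta (gen c v))"
  have Fg: "F \<in> gralg c I" unfolding F_def using assms by (intro smul_gralg delta_gralg gen_reduced)
  define z where "z = inverse (omega c) ^ a * omega c ^ col v"
  have pF: "phi c col F = z"
    using chr_ins[OF assms(1), of col v 1 "[]"] by (simp add: F_def phi_smul gen_def z_def)
  have "proj c v a = smul (1 / of_nat c) (\<lambda>x. \<Sum>k<c. gpow c F k x)"
    by (simp add: proj_def smul_def F_def)
  then have "phi c col (proj c v a) = (1 / of_nat c) * (\<Sum>k<c. z ^ k)"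
    using phi_sum[of "{..<c}" "\<lambda>k. gpow c F k" c I] gpow_gralg[OF assms(1) Fg] phi_gpow[OF assms(1) Fg] pF
    by (simp add: phi_smul)
  moreover have "a = col v \<Longrightarrow> z = 1" by (simp add: z_def power_inverse)
  moreover have "a \<noteq> col v \<Longrightarrow> (\<Sum>k<c. z ^ k) = 0"
  proof -
    assume ne: "a \<noteq> col v"
    have "z \<noteq> 1"
    proof
      assume "z = 1"
      then have "omega c ^ col v = omega c ^ a" by (simp add: z_def power_inverse field_simps)
      then show False using omega_inj[OF assms(1) assms(4) assms(3)] ne by simp
    qed
    moreover have "z ^ c = 1"
    proof -
      have "z ^ c = (inverse (omega c) ^ a) ^ c * (omega c ^ col v) ^ c"
        by (simp add: z_def power_mult_distrib)
      also have "\<dots> = (inverse (omega c) ^ c) ^ a * (omega c ^ c) ^ col v"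
        by (simp only: power_mult[symmetric] mult.commute)
      also have "\<dots> = 1" using omega_c[OF assms(1)] by (simp add: power_inverse)
      finally show ?thesis .
    qed
    ultimately show ?thesis by (simp add: geometric_sum)
  qed
  ultimately show ?thesis using assms(1) by auto
qed




lemma conv_delta_right:
  assumes "a \<in> gralg m I" shows "conv m a (delta []) = a"
proof
  fix z
  have f: "finite (supp a)" using assms by (simp add: gralg_iff)
  have "conv m a (delta []) z = (\<Sum>(x,y)\<in>supp a \<times> {[]}. if wmult m x y = z then a x * delta [] y else 0)"
    using f by (intro conv_sup) auto
  also have "\<dots> = (\<Sum>x\<in>supp a. if x = z then a x else 0)"
    unfolding sum.cartesian_product[symmetric]
  proof (rule sum.cong[OF refl])
    fix x assume "x \<in> supp a"
    then have "reduced m I x" using assms by (simp add: gralg_iff)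
    then show "(\<Sum>y\<in>{[]}. if wmult m x y = z then a x * delta [] y else 0) = (if x = z then a x else 0)"
      by (simp add: wmult_Nil_right delta_def)
  qed
  also have "\<dots> = a z" using f by (simp add: sum.delta' supp_def)
  finally show "conv m a (delta []) z = a z" .
qed

lemma smul_app: "smul a f x = a * f x" by (simp add: smul_def)

lemma conv_smul_left:
  assumes "finite (supp g)" shows "conv m (smul a0 (delta [])) g = smul a0 g"
proof
  fix z
  have s: "supp (smul a0 (delta [])) \<subseteq> {[]}" by (auto simp: supp_def smul_def delta_def)
  have "conv m (smul a0 (delta [])) g z = (\<Sum>(x,y)\<in>{[]} \<times> supp g. if wmult m x y = z then smul a0 (delta []) x * g y else 0)"
    using assms s by (intro conv_sup) auto
  also have "\<dots> = (\<Sum>y\<in>supp g. if y = z then a0 * g y else 0)"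
    unfolding sum.cartesian_product[symmetric] smul_def delta_def by (simp cong: if_cong)
  also have "\<dots> = smul a0 g z" using assms by (simp add: sum.delta' supp_def smul_def)
  finally show "conv m (smul a0 (delta [])) g z = smul a0 g z" .
qed

lemma conv_delta_delta: "conv m (delta x) (delta y) = delta (wmult m x y)"
  unfolding conv_def supp_delta by (rule ext) (simp add: delta_def)

lemma S_gralg:
  assumes "c > 0"
  shows "{conv c (proj c v a) (proj c w b) | v w a b. v \<in> V \<and> w \<in> V \<and> a < c \<and> b < c \<and> lam_zero E v w a b} \<subseteq> gralg c V"
  using assms by (auto intro!: conv_gralg proj_gralg)

lemma ideal_hom_gralg: "c > 0 \<Longrightarrow> f \<in> ideal_hom V E c \<Longrightarrow> f \<in> gralg c V"
  unfolding ideal_hom_def by (rule ideal_gralg[OF _ S_gralg])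

lemma ideal_full:
  assumes "c > 0" "delta [] \<in> ideal_hom V E c"
  shows "\<not> A_nonzero V E c"
proof -
  have "gralg c V \<subseteq> ideal_hom V E c"
  proof
    fix a assume a: "a \<in> gralg c V"
    have "conv c a (delta []) \<in> ideal_hom V E c"
      using assms(2) a unfolding ideal_hom_def by (rule gideal.left)
    then show "a \<in> ideal_hom V E c" using conv_delta_right[OF a] by simp
  qed
  then show ?thesis using ideal_hom_gralg[OF assms(1)] unfolding A_nonzero_def by blast
qed

lemma ideal_phi:
  assumes "c > 0" "\<forall>v\<in>V. col v < c" "\<forall>(v,w)\<in>E. col v \<noteq> col w"
    and "f \<in> ideal_hom V E c"
  shows "f \<in> gralg c V \<and> phi c col f = 0"
  using assms(4) unfolding ideal_hom_def
proof induction
  case (base s)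
  then obtain v w a b where s: "s = conv c (proj c v a) (proj c w b)" "v \<in> V" "w \<in> V" "a < c" "b < c" "lam_zero E v w a b"
    by blast
  have g: "proj c v a \<in> gralg c V" "proj c w b \<in> gralg c V" using s assms by (auto intro: proj_gralg)
  then have "phi c col s = phi c col (proj c v a) * phi c col (proj c w b)"
    unfolding s(1) using assms(1) by (intro phi_conv) (auto simp: gralg_iff)
  also have "\<dots> = 0"
    using s assms(2,3) phi_proj[OF assms(1), of v V a col] phi_proj[OF assms(1), of w V b col]
    by (auto simp: lam_zero_def)
  moreover have "s \<in> gralg c V" using g s(1) assms(1) by (simp add: conv_gralg)
  ultimately show ?case by simp
next
  case zero then show ?case by (simp add: zero_gralg)
next
  case (add f g)
  then have "finite (supp f)" "finite (supp g)" by (auto simp: gralg_iff)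
  then show ?case using add by (simp add: add_gralg phi_add)
next
  case (left f a)
  then have "finite (supp f)" "finite (supp a)" by (auto simp: gralg_iff)
  then show ?case using left assms(1) by (simp add: conv_gralg phi_conv)
next
  case (right f a)
  then have "finite (supp f)" "finite (supp a)" by (auto simp: gralg_iff)
  then show ?case using right assms(1) by (simp add: conv_gralg phi_conv)
next
  case (star f) then show ?case using assms(1) phi_gstar[OF assms(1), of f V col] by (simp add: gstar_gralg)
qed

lemma A_nonzero_col:
  assumes "c > 0" "\<forall>v\<in>V. col v < c" "\<forall>(v,w)\<in>E. col v \<noteq> col w"
  shows "A_nonzero V E c"
proof -
  have "delta [] \<in> gralg c V" by (simp add: delta_gralg)
  moreover have "phi c col (delta []) = 1" by simp
  ultimately show ?thesis using ideal_phi[OF assms] unfolding A_nonzero_def by force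
qed


lemma proj1: "proj 1 v 0 = delta []"
  by (rule ext) (simp add: proj_def gpow_def)

lemma not_A1:
  assumes "graph V E" "(v,w) \<in> E"
  shows "\<not> A_nonzero V E 1"
proof -
  have vw: "v \<in> V" "w \<in> V" using assms by (auto simp: graph_def)
  have "conv 1 (proj 1 v 0) (proj 1 w 0) \<in> ideal_hom V E 1"
    unfolding ideal_hom_def using vw assms(2)
    by (intro gideal.base) (auto simp: lam_zero_def)
  moreover have "conv 1 (proj 1 v 0) (proj 1 w 0) = delta []"
    unfolding proj1 conv_delta_delta by (simp add: wmult_def)
  ultimately show ?thesis by (intro ideal_full) auto
qed

lemma I_smul:
  assumes "c > 0" "f \<in> ideal_hom V E c" shows "smul a f \<in> ideal_hom V E c"
proof -
  have "finite (supp f)" using ideal_hom_gralg[OF assms] by (simp add: gralg_iff)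
  then have "smul a f = conv c (smul a (delta [])) f" by (simp add: conv_smul_left)
  also have "\<dots> \<in> ideal_hom V E c" using assms(2) unfolding ideal_hom_def
    by (intro gideal.left smul_gralg delta_gralg) auto
  finally show ?thesis .
qed

lemma I_diff:
  assumes "c > 0" "f \<in> ideal_hom V E c" "g \<in> ideal_hom V E c"
  shows "(\<lambda>x. f x - g x) \<in> ideal_hom V E c"
proof -
  have "(\<lambda>x. f x + smul (-1) g x) \<in> ideal_hom V E c"
    using assms I_smul[OF assms(1,3)] unfolding ideal_hom_def by (intro gideal.add)
  then show ?thesis by (simp add: smul_def)
qed

lemma I_add:
  assumes "f \<in> ideal_hom V E c" "g \<in> ideal_hom V E c"
  shows "(\<lambda>x. f x + g x) \<in> ideal_hom V E c"
  using assms unfolding ideal_hom_def by (intro gideal.add)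

lemma omega2: "omega 2 = -1" by (simp add: omega_def)

lemma proj2:
  assumes "v \<in> V"
  shows "proj 2 v a = (\<lambda>x. (1/2) * (delta [] x + (-1)^a * delta [(v,1)] x))"
proof -
  define F where "F = smul (inverse (omega 2) ^ a) (delta (gen 2 v))"
  have gen: "gen 2 v = [(v,1)]" by (simp add: gen_def)
  have Fg: "F \<in> gralg 2 V" unfolding F_def using assms by (intro smul_gralg delta_gralg gen_reduced) auto
  have "gpow 2 F 1 = F" using conv_delta_right[OF Fg] by (simp add: gpow_def)
  then have "\<And>x. (\<Sum>k<2. gpow 2 F k x) = delta [] x + F x"
    by (simp add: numeral_2_eq_2 gpow_def)
  then show ?thesis
    by (intro ext) (simp add: proj_def F_def[symmetric] F_def smul_def omega2 gen)
qed

lemma conv_e: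
  assumes "v \<noteq> w"
  shows "conv 2 (\<lambda>x. (1/2) * (delta [] x + s * delta [(v,1)] x)) (\<lambda>x. (1/2) * (delta [] x + t * delta [(w,1)] x)) z
    = (1/4) * (delta [] z + t * delta [(w,1)] z + s * delta [(v,1)] z + s * t * delta [(v,1),(w,1)] z)" (is "_ = ?R")
proof -
  have s1: "supp (\<lambda>x. (1/2) * (delta [] x + s * delta [(v,1)] x)) \<subseteq> {[], [(v,1)]}"
    by (auto simp: supp_def delta_def)
  have s2: "supp (\<lambda>x. (1/2) * (delta [] x + t * delta [(w,1)] x)) \<subseteq> {[], [(w,1)]}"
    by (auto simp: supp_def delta_def)
  have wm: "wmult 2 [(v,1)] [(w,1)] = [(v,1),(w,1)]" using assms by (simp add: wmult_def)
  have wm2: "wmult 2 [(v,1)] [] = [(v,1)]" by (simp add: wmult_def)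
  have "conv 2 (\<lambda>x. (1/2) * (delta [] x + s * delta [(v,1)] x)) (\<lambda>x. (1/2) * (delta [] x + t * delta [(w,1)] x)) z
    = (\<Sum>(x,y)\<in>{[], [(v,1)]} \<times> {[], [(w,1)]}. if wmult 2 x y = z then (1/2) * (delta [] x + s * delta [(v,1)] x) * ((1/2) * (delta [] y + t * delta [(w,1)] y)) else 0)"
    by (rule conv_sup[OF _ _ s1 s2]) auto
  also have "\<dots> = ?R"
    unfolding sum.cartesian_product[symmetric]
    using assms by (simp add: wm[simplified] wm2[simplified] delta_def cong: if_cong)
  finally show ?thesis .
qed


lemma edge_sum:
  assumes "graph V E" "(v,w) \<in> E"
  shows "(\<lambda>x. delta [(v,1)] x + delta [(w,1)] x) \<in> ideal_hom V E 2"
proof -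
  have vw: "v \<in> V" "w \<in> V" "v \<noteq> w" using assms by (auto simp: graph_def)
  have b: "conv 2 (proj 2 v a) (proj 2 w a) \<in> ideal_hom V E 2" if "a < 2" for a
    unfolding ideal_hom_def using vw assms(2) that
    by (intro gideal.base) (auto simp: lam_zero_def)
  have pv0: "proj 2 v 0 = (\<lambda>x. (1/2) * (delta [] x + 1 * delta [(v,1)] x))" using proj2[OF vw(1), of 0] by simp
  have pw0: "proj 2 w 0 = (\<lambda>x. (1/2) * (delta [] x + 1 * delta [(w,1)] x))" using proj2[OF vw(2), of 0] by simp
  have pv1: "proj 2 v 1 = (\<lambda>x. (1/2) * (delta [] x + (-1) * delta [(v,1)] x))" using proj2[OF vw(1), of 1] by simp
  have pw1: "proj 2 w 1 = (\<lambda>x. (1/2) * (delta [] x + (-1) * delta [(w,1)] x))" using proj2[OF vw(2), of 1] by simp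
  have "(\<lambda>z. conv 2 (proj 2 v 0) (proj 2 w 0) z - conv 2 (proj 2 v 1) (proj 2 w 1) z) \<in> ideal_hom V E 2"
    using b[of 0] b[of 1] by (intro I_diff) auto
  also have "(\<lambda>z. conv 2 (proj 2 v 0) (proj 2 w 0) z - conv 2 (proj 2 v 1) (proj 2 w 1) z)
      = smul (1/2) (\<lambda>x. delta [(v,1)] x + delta [(w,1)] x)"
    unfolding pv0 pw0 pv1 pw1 conv_e[OF vw(3)] by (rule ext) (simp add: smul_def algebra_simps)
  finally have h: "smul (1/2) (\<lambda>x. delta [(v,1)] x + delta [(w,1)] x) \<in> ideal_hom V E 2" .
  have "smul 2 (smul (1/2) (\<lambda>x. delta [(v,1)] x + delta [(w,1)] x)) \<in> ideal_hom V E 2"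
    using I_smul[OF _ h, of 2] by simp
  moreover have "smul 2 (smul (1/2) (\<lambda>x. delta [(v,1)] x + delta [(w,1)] x)) = (\<lambda>x. delta [(v,1)] x + delta [(w,1)] x)"
    by (rule ext) (simp add: smul_def)
  ultimately show ?thesis by simp
qed

lemma A2_col:
  assumes G: "graph V E" and C: "connected_graph V E" and r: "r \<in> V" and A: "A_nonzero V E 2"
  shows "\<exists>col. (\<forall>v\<in>V. col v < (2::nat)) \<and> (\<forall>(v,w)\<in>E. col v \<noteq> col w)"
proof -
  let ?I = "ideal_hom V E 2"
  define U where "U v = delta [(v,1)]" for v :: 'a
  define P where "P v \<longleftrightarrow> (\<lambda>x. U v x - U r x) \<in> ?I" for v
  define N where "N v \<longleftrightarrow> (\<lambda>x. U v x + U r x) \<in> ?I" for v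
  have e: "(\<lambda>x. U v x + U w x) \<in> ?I" if "(v,w) \<in> E" for v w
    using edge_sum[OF G that] by (simp add: U_def)
  have PN: "N w" if "P v" "(v,w) \<in> E" for v w
  proof -
    have "(\<lambda>z. (\<lambda>x. U v x + U w x) z - (\<lambda>x. U v x - U r x) z) \<in> ?I"
      using I_diff[OF _ e[OF that(2)] that(1)[unfolded P_def]] by simp
    then show ?thesis unfolding N_def by (simp add: algebra_simps)
  qed
  have NP: "P w" if "N v" "(v,w) \<in> E" for v w
  proof -
    have "(\<lambda>z. (\<lambda>x. U v x + U w x) z - (\<lambda>x. U v x + U r x) z) \<in> ?I"
      using I_diff[OF _ e[OF that(2)] that(1)[unfolded N_def]] by simp
    then show ?thesis unfolding P_def by (simp add: algebra_simps)
  qed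
  have both: False if "P v" "N v" for v
  proof -
    have "(\<lambda>z. (\<lambda>x. U v x + U r x) z - (\<lambda>x. U v x - U r x) z) \<in> ?I"
      using I_diff[OF _ that(2)[unfolded N_def] that(1)[unfolded P_def]] by simp
    then have "smul (1/2) (\<lambda>z. (\<lambda>x. U v x + U r x) z - (\<lambda>x. U v x - U r x) z) \<in> ?I"
      using I_smul[of 2] by simp
    moreover have "smul (1/2) (\<lambda>z. (\<lambda>x. U v x + U r x) z - (\<lambda>x. U v x - U r x) z) = U r"
      by (rule ext) (simp add: smul_def)
    ultimately have Ur: "U r \<in> ?I" by simp
    have "conv 2 (U r) (U r) \<in> ?I" using Ur r unfolding ideal_hom_def U_def
      by (intro gideal.left delta_gralg) (auto simp: reduced_def)
    moreover have "conv 2 (U r) (U r) = delta []"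
      unfolding U_def conv_delta_delta by (simp add: wmult_def)
    ultimately show False using ideal_full[of 2 V E] A by auto
  qed
  have P_r: "P r" unfolding P_def ideal_hom_def by (simp add: gideal.zero)
  have PorN: "P v \<or> N v" if "(r,v) \<in> E\<^sup>*" for v
    using that
  proof (induction rule: rtrancl_induct)
    case base then show ?case using P_r by simp
  next
    case (step y z) then show ?case using PN NP by blast
  qed
  define col where "col v = (if P v then 0 else 1::nat)" for v
  have "\<forall>v\<in>V. col v < 2" by (simp add: col_def)
  moreover have "\<forall>(v,w)\<in>E. col v \<noteq> col w"
  proof (clarify)
    fix v w assume vw: "(v,w) \<in> E" and eq: "col v = col w"
    have "v \<in> V" "w \<in> V" using vw G by (auto simp: graph_def)
    then have "P v \<or> N v" "P w \<or> N w" using PorN C r by (auto simp: connected_graph_def)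
    then show False using eq vw PN NP both unfolding col_def by (metis one_neq_zero)
  qed
  ultimately show ?thesis by blast
qed


theorem mainTheorem16:
  fixes V :: "'v set" and E :: "('v \<times> 'v) set"
  assumes "graph V E" and "connected_graph V E" and "card V > 1"
  shows "chi_alg V E = 2 \<longleftrightarrow> chromatic_number V E = 2"
proof -
  have fin: "finite V" and EV: "E \<subseteq> V \<times> V" and loop: "\<forall>v. (v,v) \<notin> E"
    using assms(1) by (auto simp: graph_def)
  obtain a b where ab: "a \<in> V" "b \<in> V" "a \<noteq> b"
    using assms(3) card_le_Suc0_iff_eq[OF fin] by auto
  have "(a,b) \<in> E\<^sup>*" using assms(2) ab by (auto simp: connected_graph_def)
  then obtain x where ax: "(a,x) \<in> E" using ab(3) by (metis converse_rtranclE)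
  obtain h where h: "bij_betw h V {0..<card V}" using ex_bij_betw_finite_nat[OF fin] by blast
  have hcol: "(\<forall>v\<in>V. h v < card V) \<and> (\<forall>(v,w)\<in>E. h v \<noteq> h w)"
  proof
    show "\<forall>v\<in>V. h v < card V" using h by (auto simp: bij_betw_def)
    show "\<forall>(v,w)\<in>E. h v \<noteq> h w"
    proof clarify
      fix v w assume vw: "(v,w) \<in> E" "h v = h w"
      then have "v \<in> V" "w \<in> V" "v \<noteq> w" using EV loop by auto
      then show False using vw(2) h by (auto simp: bij_betw_def inj_on_def)
    qed
  qed
  have ge2: "2 \<le> c" if cf: "\<exists>f::'v \<Rightarrow> nat. (\<forall>v\<in>V. f v < c) \<and> (\<forall>(v,w)\<in>E. f v \<noteq> f w)" for c :: nat
  proof -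
    obtain f where f: "\<forall>v\<in>V. f v < c" "\<forall>(v,w)\<in>E. f v \<noteq> f w" using cf by blast
    have "x \<in> V" using ax EV by auto
    then have "f a < c" "f x < c" "f a \<noteq> f x" using f ab(1) ax by auto
    then show ?thesis by linarith
  qed
  have cardpos: "card V > 0" using assms(3) by simp
  have Acard: "card V \<ge> 1 \<and> A_nonzero V E (card V)"
    using A_nonzero_col[OF cardpos, of V h E] hcol cardpos by auto
  have nA1: "\<not> A_nonzero V E 1" using not_A1[OF assms(1) ax] .
  show ?thesis
  proof
    assume ca: "chi_alg V E = 2"
    have "chi_alg V E \<ge> 1 \<and> A_nonzero V E (chi_alg V E)"
      unfolding chi_alg_def by (rule LeastI[of _ "card V"]) (rule Acard)
    then have A2: "A_nonzero V E 2" using ca by simp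
    obtain r where r: "r \<in> V" using ab by blast
    obtain col where col: "\<forall>v\<in>V. col v < (2::nat)" "\<forall>(v,w)\<in>E. col v \<noteq> col w"
      using A2_col[OF assms(1,2) r A2] by blast
    show "chromatic_number V E = 2"
      unfolding chromatic_number_def
    proof (rule Least_equality)
      show "\<exists>f. (\<forall>v\<in>V. f v < (2::nat)) \<and> (\<forall>(v,w)\<in>E. f v \<noteq> f w)" using col by blast
    next
      fix y :: nat assume "\<exists>f. (\<forall>v\<in>V. f v < y) \<and> (\<forall>(v,w)\<in>E. f v \<noteq> f w)"
      then show "2 \<le> y" by (rule ge2)
    qed
  next
    assume cn: "chromatic_number V E = 2"
    have "\<exists>f. (\<forall>v\<in>V. f v < chromatic_number V E) \<and> (\<forall>(v,w)\<in>E. f v \<noteq> f w)"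
      unfolding chromatic_number_def by (rule LeastI[of _ "card V"]) (use hcol in blast)
    then obtain col where col: "\<forall>v\<in>V. col v < (2::nat)" "\<forall>(v,w)\<in>E. col v \<noteq> col w"
      using cn by auto
    have A2: "A_nonzero V E 2" using A_nonzero_col[of 2 V col E] col by simp
    show "chi_alg V E = 2"
      unfolding chi_alg_def
    proof (rule Least_equality)
      show "2 \<ge> (1::nat) \<and> A_nonzero V E 2" using A2 by simp
    next
      fix y assume "y \<ge> 1 \<and> A_nonzero V E y"
      then show "2 \<le> y" using nA1 by (cases "y = 1") auto
    qed
  qed
qed

end
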